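(* Let $(X,S)$ be an association scheme of order $n>1$ and let $H$ be an $n\times n$ Hadamard matrix whose rows and columns are indexed by the elements of $X$. Then $(\widetilde{X}, S(H))$ is an association scheme, where $\widetilde X$ and $S(H)$ are as defined in the context.
   Context: An association scheme $(X,S)$ consists of a non-empty finite set $X$ and a partition $S$ of $X\times X$ such that: $1_X:=\{(\alpha,\alpha)\mid \alpha\in X\}\in S$; for each $s\in S$, $s^*:=\{(\alpha,\beta)\mid(\beta,\alpha)\in s\}\in S$; and for all $s,t,u\in S$ the number $|\alpha s\cap \beta t^*|$ is constant for $(\alpha,\beta)\in u$, where $\alpha s:=\{\beta\mid(\alpha,\beta)\in s\}$. Its order is $|X|$. $\mathbb{F}_2$ is the field with two elements, and $x_{ab}$ denotes the element $(x,a,b)$ of $X\times\mathbb{F}_2\times\mathbb{F}_2$. For a matrix $H$ indexed by $X$, let $H^{T(0)}=H$ and $H^{T(1)}=H^T$ (transpose), and let $\delta_{ac}=1$ if $a=c$ and $0$ otherwise. Define $\widetilde X=\{x_{ab}\mid x\in X,\ a,b\in\mathbb{F}_2\}$; $\widetilde t=\{(x_{ab},x_{a(b+1)})\mid x\in X,\ a,b\in\mathbb{F}_2\}$; for $s\in S\setminus\{1_X\}$, $\widetilde s=\{(x_{ab},y_{ac})\mid (x,y)\in s,\ a,b,c\in\mathbb{F}_2\}$; $r^1_H=\{(x_{ab},y_{cd})\mid x,y\in X,\ a,b,c,d\in\mathbb{F}_2,\ (1-\delta_{ac})(H^{T(a)})_{xy}=(-1)^{b+d}\}$; $r^{-1}_H=\{(x_{ab},y_{cd})\mid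 x,y\in X,\ a,b,c,d\in\mathbb{F}_2,\ a\ne c\}\setminus r^1_H$; $S(H)=\{1_{\widetilde X},\widetilde t\}\cup\{\widetilde s\mid s\in S\setminus\{1_X\}\}\cup\{r^1_H,r^{-1}_H\}$. *)

theory Defs
  imports Complex_Main "HOL-Library.Z2"
begin

definition assoc_scheme :: "'a set \<Rightarrow> ('a \<times> 'a) set set \<Rightarrow> bool" where
  "assoc_scheme X S \<longleftrightarrow>
     finite X \<and> X \<noteq> {} \<and>
     (\<forall>s\<in>S. s \<noteq> {}) \<and>
     (\<forall>s\<in>S. \<forall>u\<in>S. s \<noteq> u \<longrightarrow> s \<inter> u = {}) \<and>
     \<Union>S = X \<times> X \<and>
     Id_on X \<in> S \<and>
     (\<forall>s\<in>S. converse s \<in> S) \<and>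
     (\<forall>s\<in>S. \<forall>t\<in>S. \<forall>u\<in>S. \<exists>c::nat. \<forall>(\<alpha>,\<beta>)\<in>u.
        card ({\<gamma>. (\<alpha>,\<gamma>) \<in> s} \<inter> {\<gamma>. (\<beta>,\<gamma>) \<in> converse t}) = c)"

definition hadamard :: "'a set \<Rightarrow> ('a \<Rightarrow> 'a \<Rightarrow> real) \<Rightarrow> bool" where
  "hadamard X H \<longleftrightarrow>
     (\<forall>x\<in>X. \<forall>y\<in>X. H x y = 1 \<or> H x y = -1) \<and>
     (\<forall>x\<in>X. \<forall>y\<in>X. (\<Sum>z\<in>X. H x z * H y z) = (if x = y then real (card X) else 0))"

definition HT :: "('a \<Rightarrow> 'a \<Rightarrow> real) \<Rightarrow> bit \<Rightarrow> 'a \<Rightarrow> 'a \<Rightarrow> real" where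
  "HT H a x y = (if a = 0 then H x y else H y x)"

definition kdelta :: "bit \<Rightarrow> bit \<Rightarrow> real" where
  "kdelta a c = (if a = c then 1 else 0)"

definition sgnpow :: "bit \<Rightarrow> real" where
  "sgnpow b = (if b = 0 then 1 else -1)"

text \<open>x_{ab} is represented as (x, a, b).\<close>
definition Xt :: "'a set \<Rightarrow> ('a \<times> bit \<times> bit) set" where
  "Xt X = {(x, a, b) | x a b. x \<in> X}"

definition t_rel :: "'a set \<Rightarrow> (('a \<times> bit \<times> bit) \<times> ('a \<times> bit \<times> bit)) set" where
  "t_rel X = {((x, a, b), (x, a, b + 1)) | x a b. x \<in> X}"

definition s_tilde :: "('a \<times> 'a) set \<Rightarrow> (('a \<times> bit \<times> bit) \<times> ('a \<times> bit \<times> bit)) set" where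
  "s_tilde s = {((x, a, b), (y, a, c)) | x y a b c. (x, y) \<in> s}"

definition r1 :: "'a set \<Rightarrow> ('a \<Rightarrow> 'a \<Rightarrow> real) \<Rightarrow> (('a \<times> bit \<times> bit) \<times> ('a \<times> bit \<times> bit)) set" where
  "r1 X H = {((x, a, b), (y, c, d)) | x y a b c d. x \<in> X \<and> y \<in> X \<and>
              (1 - kdelta a c) * HT H a x y = sgnpow (b + d)}"

definition rm1 :: "'a set \<Rightarrow> ('a \<Rightarrow> 'a \<Rightarrow> real) \<Rightarrow> (('a \<times> bit \<times> bit) \<times> ('a \<times> bit \<times> bit)) set" where
  "rm1 X H = {((x, a, b), (y, c, d)) | x y a b c d. x \<in> X \<and> y \<in> X \<and> a \<noteq> c} - r1 X H"

definition SH :: "'a set \<Rightarrow> ('a \<times> 'a) set set \<Rightarrow> ('a \<Rightarrow> 'a \<Rightarrow> real)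
                   \<Rightarrow> (('a \<times> bit \<times> bit) \<times> ('a \<times> bit \<times> bit)) set set" where
  "SH X S H = {Id_on (Xt X), t_rel X} \<union> s_tilde ` (S - {Id_on X}) \<union> {r1 X H, rm1 X H}"

end

theory Submission
  imports Defs
begin

declare add_bit_eq_xor[simp del]
lemma bit_cases: "(b::bit) = 0 \<or> b = 1" by (metis bit_not_zero_iff)
lemma bit_UNIV: "(UNIV::bit set) = {0,1}" using bit_cases by auto
lemma bit_add_self [simp]: "(b::bit) + b = 0" using bit_cases[of b] by auto
lemma bit_ne_plus1: "(b::bit) \<noteq> b + 1" "b + 1 \<noteq> b" using bit_cases[of b] by auto
lemma sgnpow_add: "sgnpow (b + d) = sgnpow b * sgnpow d"
  using bit_cases[of b] bit_cases[of d] by (auto simp: sgnpow_def)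
lemma bit_neq: "(a::bit) \<noteq> c \<longleftrightarrow> c = a + 1" using bit_cases[of a] bit_cases[of c] by auto
lemma eq_plus1[simp]: "((d::bit) = b + 1) = (d \<noteq> b)" "(b + 1 = d) = (d \<noteq> b)"
  using bit_cases[of b] bit_cases[of d] by auto
lemma plus11[simp]: "(b::bit) + 1 + 1 = b" using bit_cases[of b] by auto

lemma mem_Xt[simp]: "(x,a,b) \<in> Xt X \<longleftrightarrow> x \<in> X" by (auto simp: Xt_def)
lemma Xt_eq: "Xt X = X \<times> UNIV" by (auto simp: Xt_def)
lemma mem_Id[simp]: "((x,a,b),(y,c,d)) \<in> Id_on (Xt X) \<longleftrightarrow> x \<in> X \<and> y = x \<and> c = a \<and> d = b"
  by (auto simp: Id_on_def)
lemma mem_t[simp]: "((x,a,b),(y,c,d)) \<in> t_rel X \<longleftrightarrow> x \<in> X \<and> y = x \<and> c = a \<and> d \<noteq> b"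
  by (auto simp: t_rel_def)
lemma mem_s[simp]: "((x,a,b),(y,c,d)) \<in> s_tilde s \<longleftrightarrow> (x,y) \<in> s \<and> c = a"
  by (auto simp: s_tilde_def)
lemma mem_r1[simp]: "((x,a,b),(y,c,d)) \<in> r1 X H \<longleftrightarrow> x \<in> X \<and> y \<in> X \<and> a \<noteq> c \<and> HT H a x y = sgnpow (b + d)"
  by (auto simp: r1_def kdelta_def sgnpow_def)
lemma mem_rm1[simp]: "((x,a,b),(y,c,d)) \<in> rm1 X H \<longleftrightarrow> x \<in> X \<and> y \<in> X \<and> a \<noteq> c \<and> HT H a x y \<noteq> sgnpow (b + d)"
  by (auto simp: rm1_def)

lemma col_orth:
  assumes fin: "finite X" and hd: "hadamard X H" and x: "x \<in> X" and z: "z \<in> X"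
  shows "(\<Sum>y\<in>X. H y x * H y z) = (if x = z then real (card X) else 0)"
proof -
  define n where "n = real (card X)"
  define G where "G y z = (\<Sum>x\<in>X. H x y * H x z)" for y z
  have pm: "\<And>x y. x \<in> X \<Longrightarrow> y \<in> X \<Longrightarrow> H x y * H x y = 1"
    using hd unfolding hadamard_def by (metis mult_minus_left mult_minus_right mult_1_left minus_minus)
  have R: "\<And>x w. x \<in> X \<Longrightarrow> w \<in> X \<Longrightarrow> (\<Sum>y\<in>X. H x y * H w y) = (if x = w then n else 0)"
    using hd unfolding hadamard_def n_def by auto
  have "(\<Sum>y\<in>X. \<Sum>z\<in>X. G y z * G y z)
      = (\<Sum>y\<in>X. \<Sum>z\<in>X. \<Sum>x\<in>X. \<Sum>w\<in>X. (H x y * H w y) * (H x z * H w z))"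
    unfolding G_def by (simp add: sum_product algebra_simps)
  also have "\<dots> = (\<Sum>y\<in>X. \<Sum>x\<in>X. \<Sum>z\<in>X. \<Sum>w\<in>X. (H x y * H w y) * (H x z * H w z))"
    by (rule sum.cong[OF refl], rule sum.swap)
  also have "\<dots> = (\<Sum>y\<in>X. \<Sum>x\<in>X. \<Sum>w\<in>X. \<Sum>z\<in>X. (H x y * H w y) * (H x z * H w z))"
    by (rule sum.cong[OF refl], rule sum.cong[OF refl], rule sum.swap)
  also have "\<dots> = (\<Sum>x\<in>X. \<Sum>y\<in>X. \<Sum>w\<in>X. \<Sum>z\<in>X. (H x y * H w y) * (H x z * H w z))"
    by (rule sum.swap)
  also have "\<dots> = (\<Sum>x\<in>X. \<Sum>w\<in>X. \<Sum>y\<in>X. \<Sum>z\<in>X. (H x y * H w y) * (H x z * H w z))"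
    by (rule sum.cong[OF refl], rule sum.swap)
  also have "\<dots> = (\<Sum>x\<in>X. \<Sum>w\<in>X. (\<Sum>y\<in>X. H x y * H w y) * (\<Sum>z\<in>X. H x z * H w z))"
    by (simp add: sum_product)
  also have "\<dots> = (\<Sum>x\<in>X. \<Sum>w\<in>X. (if x = w then n * n else 0))"
    by (intro sum.cong refl) (simp add: R)
  also have "\<dots> = n * n * n" using fin by (simp add: n_def)
  finally have S1: "(\<Sum>y\<in>X. \<Sum>z\<in>X. G y z * G y z) = n * n * n" .
  have S2: "(\<Sum>y\<in>X. G y y) = n * n"
    unfolding G_def using pm fin by (subst sum.swap) (simp add: n_def)
  have pt: "\<And>y z. (G y z - (if y = z then n else 0))^2 = G y z * G y z - 2 * (if y = z then n * G y z else 0) + (if y = z then n*n else 0)"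
    by (simp add: power2_eq_square algebra_simps)
  have "(\<Sum>y\<in>X. \<Sum>z\<in>X. (G y z - (if y = z then n else 0))^2)
     = (\<Sum>y\<in>X. (\<Sum>z\<in>X. G y z * G y z) - 2 * (n * G y y) + n * n)"
    proof (rule sum.cong[OF refl])
    fix y assume y: "y \<in> X"
    show "(\<Sum>z\<in>X. (G y z - (if y = z then n else 0))^2) = (\<Sum>z\<in>X. G y z * G y z) - 2 * (n * G y y) + n * n"
      unfolding pt by (simp only: sum.distrib sum_subtractf sum_distrib_left[symmetric]) (simp add: sum.delta sum.delta' fin y)
  qed
  also have "\<dots> = (\<Sum>y\<in>X. \<Sum>z\<in>X. G y z * G y z) - 2 * n * (\<Sum>y\<in>X. G y y) + n * n * n"
    using fin by (simp add: sum.distrib sum_subtractf sum_distrib_left n_def algebra_simps)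
  also have "\<dots> = 0" using S1 S2 by (simp add: algebra_simps)
  finally have Z: "(\<Sum>y\<in>X. \<Sum>z\<in>X. (G y z - (if y = z then n else 0))^2) = 0" .
  have "(\<Sum>z\<in>X. (G x z - (if x = z then n else 0))^2) = 0"
    using Z fin x by (subst (asm) sum_nonneg_eq_0_iff) (auto intro: sum_nonneg)
  hence "(G x z - (if x = z then n else 0))^2 = 0"
    using fin z by (subst (asm) sum_nonneg_eq_0_iff) auto
  thus ?thesis unfolding G_def n_def by simp
qed


lemma rel_eqI: "(\<And>x a b y c d. ((x,a,b),(y,c,d)) \<in> R \<longleftrightarrow> ((x,a,b),(y,c,d)) \<in> Q) \<Longrightarrow> R = Q"
  by (rule set_eqI) (metis prod_cases3 surj_pair)
lemma tri_eqI: "(\<And>x a b. (x,a,b) \<in> R \<longleftrightarrow> (x,a,b) \<in> Q) \<Longrightarrow> R = Q"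
  by (rule set_eqI) (metis prod_cases3)

lemma HT_flip: "a \<noteq> c \<Longrightarrow> HT H c y x = HT H a x y"
  using bit_cases[of a] bit_cases[of c] by (auto simp: HT_def)
lemma sgnpow_pm: "sgnpow b = 1 \<or> sgnpow b = -1" by (simp add: sgnpow_def)
lemma sgnpow_p1: "sgnpow (b + 1) = - sgnpow b" "sgnpow (1 + b) = - sgnpow b"
  using bit_cases[of b] by (auto simp: sgnpow_def)
lemma sgnpow_0[simp]: "sgnpow 0 = 1" and sgnpow_1[simp]: "sgnpow 1 = -1" by (auto simp: sgnpow_def)
lemma card_bit: "card (UNIV::bit set) = 2" by (simp add: bit_UNIV)
lemma finite_bit[simp]: "finite (UNIV::bit set)" by (simp add: bit_UNIV)

definition flip :: "'a \<times> bit \<times> bit \<Rightarrow> 'a \<times> bit \<times> bit" where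
  "flip p = (case p of (x,a,b) \<Rightarrow> (x,a,b+1))"
lemma flip_simp[simp]: "flip (x,a,b) = (x,a,b+1)" by (simp add: flip_def)

definition cnt where "cnt s t \<alpha> \<beta> = card {\<gamma>. (\<alpha>,\<gamma>) \<in> s \<and> (\<gamma>,\<beta>) \<in> t}"

lemma sgnpow_nz[simp]: "sgnpow b \<noteq> 0" by (auto simp: sgnpow_def)
declare sgnpow_p1[simp]
lemma sgnpow_neq[simp]: "sgnpow b \<noteq> - sgnpow b" "- sgnpow b \<noteq> sgnpow b" by (auto simp: sgnpow_def)

definition PP where
  "PP U s t = (\<forall>u\<in>U. \<exists>c. \<forall>x a b z c' f. ((x,a,b),(z,c',f)) \<in> u \<longrightarrow> cnt s t (x,a,b) (z,c',f) = c)"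

lemma sgn_ne: "(b::bit) \<noteq> f \<Longrightarrow> sgnpow (b + f) = -1"
  using bit_cases[of b] bit_cases[of f] by (auto simp: sgnpow_def)

context
  fixes X :: "'a set" and S :: "('a \<times> 'a) set set" and H :: "'a \<Rightarrow> 'a \<Rightarrow> real"
  assumes AS: "assoc_scheme X S" and HD: "hadamard X H"
begin

lemma finX: "finite X" using AS by (simp add: assoc_scheme_def)
lemma XNE: "X \<noteq> {}" using AS by (simp add: assoc_scheme_def)
lemma AS_U: "\<Union>S = X \<times> X" using AS by (simp add: assoc_scheme_def)
lemma AS_D: "\<forall>s\<in>S. \<forall>u\<in>S. s \<noteq> u \<longrightarrow> s \<inter> u = {}" using AS by (simp add: assoc_scheme_def)
lemma AS_N: "\<forall>s\<in>S. s \<noteq> {}" using AS by (simp add: assoc_scheme_def)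
lemma AS_C: "\<forall>s\<in>S. converse s \<in> S" using AS by (simp add: assoc_scheme_def)
lemma AS_I: "\<forall>s\<in>S. \<forall>t\<in>S. \<forall>u\<in>S. \<exists>c::nat. \<forall>(\<alpha>,\<beta>)\<in>u.
        card ({\<gamma>. (\<alpha>,\<gamma>) \<in> s} \<inter> {\<gamma>. (\<beta>,\<gamma>) \<in> converse t}) = c" using AS by (simp add: assoc_scheme_def)
lemma S_sub: "w \<in> S \<Longrightarrow> (x,y) \<in> w \<Longrightarrow> x \<in> X \<and> y \<in> X"
  using AS_U by blast
lemma S_IdS: "Id_on X \<in> S" using AS by (simp add: assoc_scheme_def)
lemma S_disj: "w \<in> S \<Longrightarrow> v \<in> S \<Longrightarrow> p \<in> w \<Longrightarrow> p \<in> v \<Longrightarrow> w = v"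
  using AS_D by blast
lemma S_noId: "w \<in> S \<Longrightarrow> w \<noteq> Id_on X \<Longrightarrow> (x,x) \<notin> w"
  using S_disj[OF _ S_IdS, of w "(x,x)"] S_sub[of w x x] by auto
lemma S_cover: "x \<in> X \<Longrightarrow> y \<in> X \<Longrightarrow> \<exists>w\<in>S. (x,y) \<in> w"
  using AS_U by blast
lemma S_ne: "w \<in> S \<Longrightarrow> w \<noteq> {}" using AS_N by blast
lemma S_conv: "w \<in> S \<Longrightarrow> converse w \<in> S" using AS_C by blast
lemma S_int: "s \<in> S \<Longrightarrow> t \<in> S \<Longrightarrow> u \<in> S \<Longrightarrow> \<exists>c. \<forall>x z. (x,z) \<in> u \<longrightarrow> card {y. (x,y) \<in> s \<and> (y,z) \<in> t} = c"
proof -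
  assume "s \<in> S" "t \<in> S" "u \<in> S"
  then obtain c where c: "\<forall>(\<alpha>,\<beta>)\<in>u. card ({\<gamma>. (\<alpha>,\<gamma>) \<in> s} \<inter> {\<gamma>. (\<beta>,\<gamma>) \<in> converse t}) = c"
    using AS_I by blast
  have "\<And>x z. {\<gamma>. (x,\<gamma>) \<in> s} \<inter> {\<gamma>. (z,\<gamma>) \<in> converse t} = {y. (x,y) \<in> s \<and> (y,z) \<in> t}" by auto
  with c show ?thesis by (intro exI[of _ c] allI impI) force
qed
lemma val_out: "s \<in> S \<Longrightarrow> \<exists>k. \<forall>x\<in>X. card {y. (x,y) \<in> s} = k"
proof -
  assume s: "s \<in> S"
  obtain c where c: "\<forall>x z. (x,z) \<in> Id_on X \<longrightarrow> card {y. (x,y) \<in> s \<and> (y,z) \<in> converse s} = c"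
    using S_int[OF s S_conv[OF s] S_IdS] by blast
  have "\<forall>x\<in>X. card {y. (x,y) \<in> s} = c"
  proof
    fix x assume "x \<in> X" with c[rule_format, of x x] show "card {y. (x,y) \<in> s} = c" by (simp add: Id_onI)
  qed
  thus ?thesis by blast
qed
lemma val_in: "s \<in> S \<Longrightarrow> \<exists>k. \<forall>z\<in>X. card {y. (y,z) \<in> s} = k"
proof -
  assume s: "s \<in> S"
  obtain c where c: "\<forall>x z. (x,z) \<in> Id_on X \<longrightarrow> card {y. (x,y) \<in> converse s \<and> (y,z) \<in> s} = c"
    using S_int[OF S_conv[OF s] s S_IdS] by blast
  have "\<forall>x\<in>X. card {y. (y,x) \<in> s} = c"
  proof
    fix x assume "x \<in> X" with c[rule_format, of x x] show "card {y. (y,x) \<in> s} = c" by (simp add: Id_onI)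
  qed
  thus ?thesis by blast
qed

lemma H_pm: "x \<in> X \<Longrightarrow> y \<in> X \<Longrightarrow> H x y = 1 \<or> H x y = -1"
  using HD by (simp add: hadamard_def)
lemma HT_pm: "x \<in> X \<Longrightarrow> y \<in> X \<Longrightarrow> HT H a x y = 1 \<or> HT H a x y = -1"
  using H_pm by (simp add: HT_def)

lemma mem_rm1': "x \<in> X \<Longrightarrow> y \<in> X \<Longrightarrow> HT H a x y \<noteq> sgnpow (b + d) \<longleftrightarrow> HT H a x y = sgnpow (b + d + 1)"
  using HT_pm[of x y a] sgnpow_pm[of "b+d"] by (auto simp: sgnpow_p1)

lemma SH_cases: "u \<in> SH X S H \<Longrightarrow> (u = Id_on (Xt X) \<Longrightarrow> P) \<Longrightarrow> (u = t_rel X \<Longrightarrow> P)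
  \<Longrightarrow> (\<And>w. w \<in> S \<Longrightarrow> w \<noteq> Id_on X \<Longrightarrow> u = s_tilde w \<Longrightarrow> P) \<Longrightarrow> (u = r1 X H \<Longrightarrow> P) \<Longrightarrow> (u = rm1 X H \<Longrightarrow> P) \<Longrightarrow> P"
  unfolding SH_def by blast

lemma SH_sub: "u \<in> SH X S H \<Longrightarrow> ((x,a,b),(y,c,d)) \<in> u \<Longrightarrow> x \<in> X \<and> y \<in> X"
  by (erule SH_cases) (auto dest: S_sub)

lemma SH_disj: "u \<in> SH X S H \<Longrightarrow> v \<in> SH X S H \<Longrightarrow> p \<in> u \<Longrightarrow> p \<in> v \<Longrightarrow> u = v"
proof -
  assume u: "u \<in> SH X S H" and v: "v \<in> SH X S H" and pu: "p \<in> u" and pv: "p \<in> v"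
  obtain x a b y c d where p: "p = ((x,a,b),(y,c,d))" by (metis prod_cases3 surj_pair)
  show "u = v"
    using u v pu pv unfolding p
    by (elim SH_cases) (auto dest: S_noId S_disj)
qed

lemma SH_ne: "u \<in> SH X S H \<Longrightarrow> u \<noteq> {}"
proof -
  obtain x0 where x0: "x0 \<in> X" using XNE by blast
  define d0 where "d0 = (if H x0 x0 = 1 then (0::bit) else 1)"
  have h1: "((x0,0,0),(x0,1,d0)) \<in> r1 X H" using x0 H_pm[OF x0 x0] by (auto simp: d0_def HT_def sgnpow_def)
  have h2: "((x0,0,0),(x0,1,d0+1)) \<in> rm1 X H" using x0 H_pm[OF x0 x0] by (auto simp: d0_def HT_def sgnpow_def)
  assume "u \<in> SH X S H"
  then show ?thesis
  proof (rule SH_cases)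
    fix w assume "w \<in> S" "u = s_tilde w"
    then obtain x y where "(x,y) \<in> w" using S_ne by fastforce
    then have "((x,0,0),(y,0,0)) \<in> u" using \<open>u = s_tilde w\<close> by simp
    then show ?thesis by blast
  next
    assume "u = Id_on (Xt X)" then have "((x0,0,0),(x0,0,0)) \<in> u" using x0 by simp
    then show ?thesis by blast
  next
    assume "u = t_rel X" then have "((x0,0,0),(x0,0,0+1)) \<in> u" using x0 by simp
    then show ?thesis by blast
  qed (use h1 h2 in blast)+
qed

lemma SH_union: "\<Union>(SH X S H) = Xt X \<times> Xt X"
proof (rule rel_eqI)
  fix x a b y c d
  show "((x,a,b),(y,c,d)) \<in> \<Union>(SH X S H) \<longleftrightarrow> ((x,a,b),(y,c,d)) \<in> Xt X \<times> Xt X"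
  proof
    assume "((x,a,b),(y,c,d)) \<in> \<Union>(SH X S H)"
    then show "((x,a,b),(y,c,d)) \<in> Xt X \<times> Xt X" using SH_sub by auto
  next
    assume "((x,a,b),(y,c,d)) \<in> Xt X \<times> Xt X"
    then have xy: "x \<in> X" "y \<in> X" by auto
    show "((x,a,b),(y,c,d)) \<in> \<Union>(SH X S H)"
    proof (cases "a = c")
      case False
      then show ?thesis using xy mem_rm1'[of x y a b d] unfolding SH_def
        by (cases "HT H a x y = sgnpow (b + d)") auto
    next
      case ac: True
      show ?thesis
      proof (cases "x = y")
        case True
        then show ?thesis using xy ac bit_neq[of b d] unfolding SH_def by (cases "b = d") auto
      next
        case False
        obtain w where w: "w \<in> S" "(x,y) \<in> w" using S_cover[OF xy] by blast
        have "w \<noteq> Id_on X" using w False by auto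
        then have sw: "s_tilde w \<in> SH X S H" using w unfolding SH_def by auto
        have "((x,a,b),(y,c,d)) \<in> s_tilde w" using w ac by simp
        then show ?thesis using sw by blast
      qed
    qed
  qed
qed

lemma SH_conv: "u \<in> SH X S H \<Longrightarrow> converse u \<in> SH X S H"
proof (erule SH_cases)
  assume "u = t_rel X"
  moreover have "converse (t_rel X) = t_rel X" by (rule rel_eqI) auto
  ultimately show ?thesis by (simp add: SH_def)
next
  fix w assume w: "w \<in> S" "w \<noteq> Id_on X" "u = s_tilde w"
  have "converse (s_tilde w) = s_tilde (converse w)" by (rule rel_eqI) auto
  moreover have "converse w \<noteq> Id_on X" using w by (metis converse_Id_on converse_converse)
  ultimately show ?thesis using w S_conv[OF w(1)] by (simp add: SH_def)
next
  assume "u = r1 X H"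
  moreover have "converse (r1 X H) = r1 X H" by (rule rel_eqI) (auto simp: HT_flip add.commute)
  ultimately show ?thesis by (simp add: SH_def)
next
  assume "u = rm1 X H"
  moreover have "converse (rm1 X H) = rm1 X H" by (rule rel_eqI) (auto simp: HT_flip add.commute)
  ultimately show ?thesis by (simp add: SH_def)
qed (simp add: SH_def)


lemma HT_orth: "x \<in> X \<Longrightarrow> z \<in> X \<Longrightarrow> x \<noteq> z \<Longrightarrow> (\<Sum>y\<in>X. HT H a x y * HT H a z y) = 0"
  using HD col_orth[OF finX HD, of x z] unfolding hadamard_def HT_def by (cases "a = 0") auto

lemma half: assumes x: "x \<in> X" and z: "z \<in> X" and xz: "x \<noteq> z" and e: "e = 1 \<or> e = -1"
  shows "card {y\<in>X. HT H a x y * HT H a z y = e} = card X div 2"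
proof -
  define f where "f y = HT H a x y * HT H a z y" for y
  define P where "P = {y\<in>X. f y = 1}"
  define M where "M = {y\<in>X. f y = -1}"
  have fpm: "y \<in> X \<Longrightarrow> f y = 1 \<or> f y = -1" for y
    using HT_pm[OF x, of y a] HT_pm[OF z, of y a] unfolding f_def by auto
  have XPM: "X = P \<union> M" using fpm unfolding P_def M_def by auto
  have disj: "P \<inter> M = {}" unfolding P_def M_def by auto
  have fP: "finite P" "finite M" using finX unfolding P_def M_def by auto
  have "0 = (\<Sum>y\<in>X. f y)" using HT_orth[OF x z xz] unfolding f_def by simp
  also have "\<dots> = (\<Sum>y\<in>P. f y) + (\<Sum>y\<in>M. f y)" unfolding XPM using fP disj by (rule sum.union_disjoint)
  also have "\<dots> = real (card P) - real (card M)" unfolding P_def M_def by simp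
  finally have "card P = card M" by simp
  moreover have "card X = card P + card M" unfolding XPM using fP disj by (simp add: card_Un_disjoint)
  ultimately have "card P = card X div 2" "card M = card X div 2" by auto
  then show ?thesis using e unfolding P_def M_def f_def by auto
qed

lemma same: assumes x: "x \<in> X" shows "card {y\<in>X. HT H a x y * HT H a x y = e} = (if e = 1 then card X else 0)"
proof -
  have "\<And>y. y \<in> X \<Longrightarrow> HT H a x y * HT H a x y = 1" using HT_pm[OF x] by (metis mult_1_left mult_minus1 minus_minus)
  then have "{y\<in>X. HT H a x y * HT H a x y = e} = (if e = 1 then X else {})" by auto
  then show ?thesis by simp
qed

lemma sgn_solve: "v = 1 \<or> v = -1 \<Longrightarrow> (v = sgnpow (d + f)) = (d = (if v = sgnpow f then 0 else 1))"
  using bit_cases[of d] bit_cases[of f] by (auto simp: sgnpow_add sgnpow_def)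

lemma rr_key: "v1 = 1 \<or> v1 = -1 \<Longrightarrow> v2 = 1 \<or> v2 = -1 \<Longrightarrow>
   (v1 = sgnpow (b + d) \<and> v2 = sgnpow (d + f)) = (d = (if v1 = sgnpow b then 0 else 1) \<and> v1 * v2 = sgnpow (b + f))"
  using bit_cases[of b] bit_cases[of d] bit_cases[of f] by (elim disjE) (auto simp: sgnpow_add sgnpow_def)

lemma cnt_ss: assumes "s \<in> S" "t \<in> S"
  shows "cnt (s_tilde s) (s_tilde t) (x,a,b) (z,c,f) = (if a = c then 2 * card {y. (x,y) \<in> s \<and> (y,z) \<in> t} else 0)"
proof -
  have eq: "{\<gamma>. ((x,a,b),\<gamma>) \<in> s_tilde s \<and> (\<gamma>,(z,c,f)) \<in> s_tilde t}
      = (if a = c then {y. (x,y) \<in> s \<and> (y,z) \<in> t} \<times> ({a} \<times> UNIV) else {})"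
    by (rule tri_eqI) auto
  have fin: "finite {y. (x,y) \<in> s \<and> (y,z) \<in> t}"
    by (rule finite_subset[OF _ finX]) (use S_sub assms in blast)
  show ?thesis unfolding cnt_def eq using fin by (simp add: card_cartesian_product card_bit)
qed

lemma cnt_sr: assumes "s \<in> S" "z \<in> X"
  shows "cnt (s_tilde s) (r1 X H) (x,a,b) (z,c,f) = (if a \<noteq> c then card {y. (x,y) \<in> s} else 0)"
proof -
  define dd where "dd y = (if HT H a y z = sgnpow f then (0::bit) else 1)" for y
  have eq: "{\<gamma>. ((x,a,b),\<gamma>) \<in> s_tilde s \<and> (\<gamma>,(z,c,f)) \<in> r1 X H}
      = (if a \<noteq> c then (\<lambda>y. (y,a,dd y)) ` {y. (x,y) \<in> s} else {})"
  proof (rule tri_eqI)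
    fix y e d
    show "(y,e,d) \<in> {\<gamma>. ((x,a,b),\<gamma>) \<in> s_tilde s \<and> (\<gamma>,(z,c,f)) \<in> r1 X H} \<longleftrightarrow>
          (y,e,d) \<in> (if a \<noteq> c then (\<lambda>y. (y,a,dd y)) ` {y. (x,y) \<in> s} else {})"
      using S_sub[OF assms(1), of x y] sgn_solve[OF HT_pm[of y z e], of d f] assms(2)
      by (auto simp: dd_def)
  qed
  have inj: "inj_on (\<lambda>y. (y,a,dd y)) A" for A by (rule inj_onI) auto
  show ?thesis unfolding cnt_def eq by (simp add: card_image[OF inj])
qed

lemma cnt_rs: assumes "s \<in> S" "x \<in> X"
  shows "cnt (r1 X H) (s_tilde s) (x,a,b) (z,c,f) = (if a \<noteq> c then card {y. (y,z) \<in> s} else 0)"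
proof -
  define dd where "dd y = (if HT H a x y = sgnpow b then (0::bit) else 1)" for y
  have eq: "{\<gamma>. ((x,a,b),\<gamma>) \<in> r1 X H \<and> (\<gamma>,(z,c,f)) \<in> s_tilde s}
      = (if a \<noteq> c then (\<lambda>y. (y,c,dd y)) ` {y. (y,z) \<in> s} else {})"
  proof (rule tri_eqI)
    fix y e d
    show "(y,e,d) \<in> {\<gamma>. ((x,a,b),\<gamma>) \<in> r1 X H \<and> (\<gamma>,(z,c,f)) \<in> s_tilde s} \<longleftrightarrow>
          (y,e,d) \<in> (if a \<noteq> c then (\<lambda>y. (y,c,dd y)) ` {y. (y,z) \<in> s} else {})"
      using S_sub[OF assms(1), of y z] sgn_solve[OF HT_pm[of x y a], of d b] assms(2)
      by (auto simp: dd_def add.commute)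
  qed
  have inj: "inj_on (\<lambda>y. (y,c,dd y)) A" for A by (rule inj_onI) auto
  show ?thesis unfolding cnt_def eq by (simp add: card_image[OF inj])
qed

lemma cnt_rr: assumes "x \<in> X" "z \<in> X"
  shows "cnt (r1 X H) (r1 X H) (x,a,b) (z,c,f) = (if a = c then card {y\<in>X. HT H a x y * HT H a z y = sgnpow (b + f)} else 0)"
proof -
  define dd where "dd y = (if HT H a x y = sgnpow b then (0::bit) else 1)" for y
  have eq: "{\<gamma>. ((x,a,b),\<gamma>) \<in> r1 X H \<and> (\<gamma>,(z,c,f)) \<in> r1 X H}
      = (if a = c then (\<lambda>y. (y,a+1,dd y)) ` {y\<in>X. HT H a x y * HT H a z y = sgnpow (b + f)} else {})"
  proof (rule tri_eqI)
    fix y e d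
    show "(y,e,d) \<in> {\<gamma>. ((x,a,b),\<gamma>) \<in> r1 X H \<and> (\<gamma>,(z,c,f)) \<in> r1 X H} \<longleftrightarrow>
          (y,e,d) \<in> (if a = c then (\<lambda>y. (y,a+1,dd y)) ` {y\<in>X. HT H a x y * HT H a z y = sgnpow (b + f)} else {})"
    proof (cases "y \<in> X \<and> e \<noteq> a \<and> e \<noteq> c")
      case True
      then have ac: "a = c" using bit_cases[of a] bit_cases[of c] bit_cases[of e] by auto
      have fl: "HT H e y z = HT H a z y" by (rule HT_flip) (use True in auto)
      show ?thesis using True ac assms rr_key[OF HT_pm[of x y a] HT_pm[of z y a], of b d f]
        by (auto simp: fl dd_def)
    next
      case False
      then show ?thesis using assms bit_cases[of a] bit_cases[of e] by auto
    qed
  qed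
  have inj: "inj_on (\<lambda>y. (y,k,dd y)) A" for A k by (rule inj_onI) auto
  show ?thesis unfolding cnt_def eq by (simp add: card_image[OF inj])
qed

lemma cnt_Id1: "cnt (Id_on (Xt X)) t \<alpha> \<beta> = (if \<alpha> \<in> Xt X \<and> (\<alpha>,\<beta>) \<in> t then 1 else 0)"
proof -
  have "{\<gamma>. (\<alpha>,\<gamma>) \<in> Id_on (Xt X) \<and> (\<gamma>,\<beta>) \<in> t} = (if \<alpha> \<in> Xt X \<and> (\<alpha>,\<beta>) \<in> t then {\<alpha>} else {})" by auto
  then show ?thesis unfolding cnt_def by simp
qed
lemma cnt_Id2: "cnt s (Id_on (Xt X)) \<alpha> \<beta> = (if \<beta> \<in> Xt X \<and> (\<alpha>,\<beta>) \<in> s then 1 else 0)"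
proof -
  have "{\<gamma>. (\<alpha>,\<gamma>) \<in> s \<and> (\<gamma>,\<beta>) \<in> Id_on (Xt X)} = (if \<beta> \<in> Xt X \<and> (\<alpha>,\<beta>) \<in> s then {\<beta>} else {})" by auto
  then show ?thesis unfolding cnt_def by simp
qed

lemma sgnpow_p1': "sgnpow (b + 1 + d) = - sgnpow (b + d)" "sgnpow (d + (f + 1)) = - sgnpow (d + f)"
  by (simp_all add: sgnpow_add)

lemma cnt_t1: "cnt (t_rel X) t (x,a,b) \<beta> = cnt (Id_on (Xt X)) t (x,a,b+1) \<beta>"
proof -
  have "{\<gamma>. ((x,a,b),\<gamma>) \<in> t_rel X \<and> (\<gamma>,\<beta>) \<in> t} = {\<gamma>. ((x,a,b+1),\<gamma>) \<in> Id_on (Xt X) \<and> (\<gamma>,\<beta>) \<in> t}"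
    by (rule tri_eqI) auto
  then show ?thesis unfolding cnt_def by simp
qed
lemma cnt_m1: "cnt (rm1 X H) t (x,a,b) \<beta> = cnt (r1 X H) t (x,a,b+1) \<beta>"
proof -
  have "{\<gamma>. ((x,a,b),\<gamma>) \<in> rm1 X H \<and> (\<gamma>,\<beta>) \<in> t} = {\<gamma>. ((x,a,b+1),\<gamma>) \<in> r1 X H \<and> (\<gamma>,\<beta>) \<in> t}"
  proof (rule tri_eqI)
    fix y e d
    show "(y,e,d) \<in> {\<gamma>. ((x,a,b),\<gamma>) \<in> rm1 X H \<and> (\<gamma>,\<beta>) \<in> t} \<longleftrightarrow> (y,e,d) \<in> {\<gamma>. ((x,a,b+1),\<gamma>) \<in> r1 X H \<and> (\<gamma>,\<beta>) \<in> t}"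
      using HT_pm[of x y a] sgnpow_pm[of "b+d"] by (auto simp: sgnpow_p1')
  qed
  then show ?thesis unfolding cnt_def by simp
qed
lemma cnt_t2: "cnt s (t_rel X) \<alpha> (z,c,f) = cnt s (Id_on (Xt X)) \<alpha> (z,c,f+1)"
proof -
  have "{\<gamma>. (\<alpha>,\<gamma>) \<in> s \<and> (\<gamma>,(z,c,f)) \<in> t_rel X} = {\<gamma>. (\<alpha>,\<gamma>) \<in> s \<and> (\<gamma>,(z,c,f+1)) \<in> Id_on (Xt X)}"
    by (rule tri_eqI) auto
  then show ?thesis unfolding cnt_def by simp
qed
lemma cnt_m2: "cnt s (rm1 X H) \<alpha> (z,c,f) = cnt s (r1 X H) \<alpha> (z,c,f+1)"
proof -
  have "{\<gamma>. (\<alpha>,\<gamma>) \<in> s \<and> (\<gamma>,(z,c,f)) \<in> rm1 X H} = {\<gamma>. (\<alpha>,\<gamma>) \<in> s \<and> (\<gamma>,(z,c,f+1)) \<in> r1 X H}"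
  proof (rule tri_eqI)
    fix y e d
    show "(y,e,d) \<in> {\<gamma>. (\<alpha>,\<gamma>) \<in> s \<and> (\<gamma>,(z,c,f)) \<in> rm1 X H} \<longleftrightarrow> (y,e,d) \<in> {\<gamma>. (\<alpha>,\<gamma>) \<in> s \<and> (\<gamma>,(z,c,f+1)) \<in> r1 X H}"
      using HT_pm[of y z e] sgnpow_pm[of "d+f"] by (auto simp: sgnpow_p1')
  qed
  then show ?thesis unfolding cnt_def by simp
qed


lemma fc1: "u \<in> SH X S H \<Longrightarrow> \<exists>u'\<in>SH X S H. \<forall>x a b z c f. ((x,a,b),(z,c,f)) \<in> u \<longrightarrow> ((x,a,b+1),(z,c,f)) \<in> u'"
proof (erule SH_cases)
  assume "u = Id_on (Xt X)" then show ?thesis by (intro bexI[of _ "t_rel X"]) (auto simp: SH_def)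
next
  assume "u = t_rel X" then show ?thesis by (intro bexI[of _ "Id_on (Xt X)"]) (auto simp: SH_def)
next
  fix w assume "w \<in> S" "w \<noteq> Id_on X" "u = s_tilde w" then show ?thesis by (intro bexI[of _ u]) (auto simp: SH_def)
next
  assume "u = r1 X H" then show ?thesis
    by (intro bexI[of _ "rm1 X H"]) (auto simp: SH_def sgnpow_p1' sgnpow_neq)
next
  assume "u = rm1 X H" then show ?thesis
    by (intro bexI[of _ "r1 X H"]) (auto simp: SH_def sgnpow_p1' mem_rm1')
qed

lemma fc2: "u \<in> SH X S H \<Longrightarrow> \<exists>u'\<in>SH X S H. \<forall>x a b z c f. ((x,a,b),(z,c,f)) \<in> u \<longrightarrow> ((x,a,b),(z,c,f+1)) \<in> u'"
proof (erule SH_cases)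
  assume "u = Id_on (Xt X)" then show ?thesis by (intro bexI[of _ "t_rel X"]) (auto simp: SH_def)
next
  assume "u = t_rel X" then show ?thesis by (intro bexI[of _ "Id_on (Xt X)"]) (auto simp: SH_def)
next
  fix w assume "w \<in> S" "w \<noteq> Id_on X" "u = s_tilde w" then show ?thesis by (intro bexI[of _ u]) (auto simp: SH_def)
next
  assume "u = r1 X H" then show ?thesis
    by (intro bexI[of _ "rm1 X H"]) (auto simp: SH_def sgnpow_p1' add.assoc[symmetric] sgnpow_neq)
next
  assume "u = rm1 X H" then show ?thesis
    by (intro bexI[of _ "r1 X H"]) (auto simp: SH_def sgnpow_p1' mem_rm1' add.assoc[symmetric])
qed

lemma P_flip1: "PP (SH X S H) s t \<Longrightarrow> (\<And>x a b \<beta>. cnt s' t (x,a,b) \<beta> = cnt s t (x,a,b+1) \<beta>) \<Longrightarrow> PP (SH X S H) s' t"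
  unfolding PP_def
proof
  fix u assume P: "\<forall>u\<in>SH X S H. \<exists>c. \<forall>x a b z c' f. ((x,a,b),(z,c',f)) \<in> u \<longrightarrow> cnt s t (x,a,b) (z,c',f) = c"
    and F: "\<And>x a b \<beta>. cnt s' t (x,a,b) \<beta> = cnt s t (x,a,b+1) \<beta>" and u: "u \<in> SH X S H"
  obtain u' where u': "u' \<in> SH X S H" "\<forall>x a b z c f. ((x,a,b),(z,c,f)) \<in> u \<longrightarrow> ((x,a,b+1),(z,c,f)) \<in> u'"
    using fc1[OF u] by blast
  obtain c where c: "\<forall>x a b z c' f. ((x,a,b),(z,c',f)) \<in> u' \<longrightarrow> cnt s t (x,a,b) (z,c',f) = c"
    using P u'(1) by blast
  show "\<exists>c. \<forall>x a b z c' f. ((x,a,b),(z,c',f)) \<in> u \<longrightarrow> cnt s' t (x,a,b) (z,c',f) = c"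
    using c u'(2) F by metis
qed

lemma P_flip2: "PP (SH X S H) s t \<Longrightarrow> (\<And>\<alpha> z c f. cnt s t' \<alpha> (z,c,f) = cnt s t \<alpha> (z,c,f+1)) \<Longrightarrow> PP (SH X S H) s t'"
  unfolding PP_def
proof
  fix u assume P: "\<forall>u\<in>SH X S H. \<exists>c. \<forall>x a b z c' f. ((x,a,b),(z,c',f)) \<in> u \<longrightarrow> cnt s t (x,a,b) (z,c',f) = c"
    and F: "\<And>\<alpha> z c f. cnt s t' \<alpha> (z,c,f) = cnt s t \<alpha> (z,c,f+1)" and u: "u \<in> SH X S H"
  obtain u' where u': "u' \<in> SH X S H" "\<forall>x a b z c f. ((x,a,b),(z,c,f)) \<in> u \<longrightarrow> ((x,a,b),(z,c,f+1)) \<in> u'"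
    using fc2[OF u] by blast
  obtain c where c: "\<forall>x a b z c' f. ((x,a,b),(z,c',f)) \<in> u' \<longrightarrow> cnt s t (x,a,b) (z,c',f) = c"
    using P u'(1) by blast
  show "\<exists>c. \<forall>x a b z c' f. ((x,a,b),(z,c',f)) \<in> u \<longrightarrow> cnt s t' (x,a,b) (z,c',f) = c"
    using c u'(2) F by metis
qed

lemma PP_Id1: "t \<in> SH X S H \<Longrightarrow> PP (SH X S H) (Id_on (Xt X)) t"
  unfolding PP_def
proof
  fix u assume t: "t \<in> SH X S H" and u: "u \<in> SH X S H"
  show "\<exists>c. \<forall>x a b z c' f. ((x,a,b),(z,c',f)) \<in> u \<longrightarrow> cnt (Id_on (Xt X)) t (x,a,b) (z,c',f) = c"
  proof (cases "u = t")
    case True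
    then show ?thesis using SH_sub[OF u] by (intro exI[of _ 1]) (auto simp: cnt_Id1)
  next
    case False
    then have nd: "\<And>p. p \<in> u \<Longrightarrow> p \<notin> t" using SH_disj[OF u t] by blast
    show ?thesis by (intro exI[of _ 0]) (auto simp: cnt_Id1 dest: nd)
  qed
qed

lemma PP_Id2: "s \<in> SH X S H \<Longrightarrow> PP (SH X S H) s (Id_on (Xt X))"
  unfolding PP_def
proof
  fix u assume t: "s \<in> SH X S H" and u: "u \<in> SH X S H"
  show "\<exists>c. \<forall>x a b z c' f. ((x,a,b),(z,c',f)) \<in> u \<longrightarrow> cnt s (Id_on (Xt X)) (x,a,b) (z,c',f) = c"
  proof (cases "u = s")
    case True
    then show ?thesis using SH_sub[OF u] by (intro exI[of _ 1]) (auto simp: cnt_Id2)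
  next
    case False
    then have nd: "\<And>p. p \<in> u \<Longrightarrow> p \<notin> s" using SH_disj[OF u t] by blast
    show ?thesis by (intro exI[of _ 0]) (auto simp: cnt_Id2 dest: nd)
  qed
qed

lemma PP_ss: assumes s: "s \<in> S" and t: "t \<in> S" shows "PP (SH X S H) (s_tilde s) (s_tilde t)"
  unfolding PP_def
proof
  fix u assume u: "u \<in> SH X S H"
  obtain c0 where c0: "\<forall>x z. (x,z) \<in> Id_on X \<longrightarrow> card {y. (x,y) \<in> s \<and> (y,z) \<in> t} = c0"
    using S_int[OF s t S_IdS] by blast
  from u show "\<exists>c. \<forall>x a b z c' f. ((x,a,b),(z,c',f)) \<in> u \<longrightarrow> cnt (s_tilde s) (s_tilde t) (x,a,b) (z,c',f) = c"
  proof (rule SH_cases)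
    fix w assume w: "w \<in> S" "w \<noteq> Id_on X" "u = s_tilde w"
    obtain c1 where c1: "\<forall>x z. (x,z) \<in> w \<longrightarrow> card {y. (x,y) \<in> s \<and> (y,z) \<in> t} = c1"
      using S_int[OF s t w(1)] by blast
    show ?thesis using w c1 by (intro exI[of _ "2*c1"]) (auto simp: cnt_ss[OF s t])
  next
    assume "u = Id_on (Xt X)" then show ?thesis using c0 by (intro exI[of _ "2*c0"]) (auto simp: cnt_ss[OF s t] Id_onI)
  next
    assume "u = t_rel X" then show ?thesis using c0 by (intro exI[of _ "2*c0"]) (auto simp: cnt_ss[OF s t] Id_onI)
  next
    assume "u = r1 X H" then show ?thesis by (intro exI[of _ 0]) (auto simp: cnt_ss[OF s t])
  next
    assume "u = rm1 X H" then show ?thesis by (intro exI[of _ 0]) (auto simp: cnt_ss[OF s t])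
  qed
qed

lemma PP_sr: assumes s: "s \<in> S" shows "PP (SH X S H) (s_tilde s) (r1 X H)"
  unfolding PP_def
proof
  fix u assume u: "u \<in> SH X S H"
  obtain k where k: "\<forall>x\<in>X. card {y. (x,y) \<in> s} = k" using val_out[OF s] by blast
  have key: "((x,a,b),(z,c,f)) \<in> u \<Longrightarrow> cnt (s_tilde s) (r1 X H) (x,a,b) (z,c,f) = (if a \<noteq> c then k else 0)"
    for x a b z c f using SH_sub[OF u, of x a b z c f] cnt_sr[OF s, of z x a b c f] k by auto
  from u show "\<exists>c. \<forall>x a b z c' f. ((x,a,b),(z,c',f)) \<in> u \<longrightarrow> cnt (s_tilde s) (r1 X H) (x,a,b) (z,c',f) = c"
  proof (rule SH_cases)
    fix w assume "w \<in> S" "w \<noteq> Id_on X" "u = s_tilde w" then show ?thesis using key by (intro exI[of _ 0]) auto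
  next
    assume "u = Id_on (Xt X)" then show ?thesis using key by (intro exI[of _ 0]) auto
  next
    assume "u = t_rel X" then show ?thesis using key by (intro exI[of _ 0]) auto
  next
    assume "u = r1 X H" then show ?thesis using key by (intro exI[of _ k]) auto
  next
    assume "u = rm1 X H" then show ?thesis using key by (intro exI[of _ k]) auto
  qed
qed

lemma PP_rs: assumes s: "s \<in> S" shows "PP (SH X S H) (r1 X H) (s_tilde s)"
  unfolding PP_def
proof
  fix u assume u: "u \<in> SH X S H"
  obtain k where k: "\<forall>z\<in>X. card {y. (y,z) \<in> s} = k" using val_in[OF s] by blast
  have key: "((x,a,b),(z,c,f)) \<in> u \<Longrightarrow> cnt (r1 X H) (s_tilde s) (x,a,b) (z,c,f) = (if a \<noteq> c then k else 0)"
    for x a b z c f using SH_sub[OF u, of x a b z c f] cnt_rs[OF s, of x a b z c f] k by auto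
  from u show "\<exists>c. \<forall>x a b z c' f. ((x,a,b),(z,c',f)) \<in> u \<longrightarrow> cnt (r1 X H) (s_tilde s) (x,a,b) (z,c',f) = c"
  proof (rule SH_cases)
    fix w assume "w \<in> S" "w \<noteq> Id_on X" "u = s_tilde w" then show ?thesis using key by (intro exI[of _ 0]) auto
  next
    assume "u = Id_on (Xt X)" then show ?thesis using key by (intro exI[of _ 0]) auto
  next
    assume "u = t_rel X" then show ?thesis using key by (intro exI[of _ 0]) auto
  next
    assume "u = r1 X H" then show ?thesis using key by (intro exI[of _ k]) auto
  next
    assume "u = rm1 X H" then show ?thesis using key by (intro exI[of _ k]) auto
  qed
qed

lemma PP_rr: "PP (SH X S H) (r1 X H) (r1 X H)"
  unfolding PP_def
proof
  fix u assume u: "u \<in> SH X S H"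
  have key: "((x,a,b),(z,c,f)) \<in> u \<Longrightarrow> cnt (r1 X H) (r1 X H) (x,a,b) (z,c,f) = (if a = c then card {y\<in>X. HT H a x y * HT H a z y = sgnpow (b + f)} else 0)"
    for x a b z c f using SH_sub[OF u, of x a b z c f] cnt_rr by auto
  from u show "\<exists>c. \<forall>x a b z c' f. ((x,a,b),(z,c',f)) \<in> u \<longrightarrow> cnt (r1 X H) (r1 X H) (x,a,b) (z,c',f) = c"
  proof (rule SH_cases)
    assume "u = Id_on (Xt X)" then show ?thesis using key by (intro exI[of _ "card X"]) (auto simp: same)
  next
    assume "u = t_rel X" then show ?thesis using key by (intro exI[of _ 0]) (auto simp: same sgn_ne)
  next
    fix w assume w: "w \<in> S" "w \<noteq> Id_on X" "u = s_tilde w"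
    show ?thesis
    proof (intro exI[of _ "card X div 2"] allI impI)
      fix x a b z c' f assume m: "((x,a,b),(z,c',f)) \<in> u"
      have xz: "x \<noteq> z" "x \<in> X" "z \<in> X" using m w S_noId[OF w(1,2)] S_sub[OF w(1)] by auto
      show "cnt (r1 X H) (r1 X H) (x,a,b) (z,c',f) = card X div 2"
        using key[OF m] m w half[OF xz(2,3,1) sgnpow_pm] by simp
    qed
  next
    assume "u = r1 X H" then show ?thesis using key by (intro exI[of _ 0]) auto
  next
    assume "u = rm1 X H" then show ?thesis using key by (intro exI[of _ 0]) auto
  qed
qed

definition base where "base s \<longleftrightarrow> s = Id_on (Xt X) \<or> s = r1 X H \<or> (\<exists>w\<in>S. w \<noteq> Id_on X \<and> s = s_tilde w)"

lemma SH_base: "base s \<Longrightarrow> s \<in> SH X S H" unfolding base_def SH_def by auto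

lemma PP_bb: "base s \<Longrightarrow> base t \<Longrightarrow> PP (SH X S H) s t"
proof -
  assume bs: "base s" and bt: "base t"
  have tS: "t \<in> SH X S H" and sS: "s \<in> SH X S H" using bs bt SH_base by auto
  have "PP (SH X S H) s t" if "t = Id_on (Xt X)" using PP_Id2[OF sS] that by simp
  moreover have "PP (SH X S H) s t" if "s = Id_on (Xt X)" using PP_Id1[OF tS] that by simp
  moreover have "PP (SH X S H) s t" if "s \<noteq> Id_on (Xt X)" "t \<noteq> Id_on (Xt X)"
  proof -
    have s2: "s = r1 X H \<or> (\<exists>w\<in>S. s = s_tilde w)" and t2: "t = r1 X H \<or> (\<exists>w\<in>S. t = s_tilde w)"
      using bs bt that unfolding base_def by blast+
    show ?thesis using s2 t2 PP_rr PP_rs PP_sr PP_ss by blast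
  qed
  ultimately show ?thesis by blast
qed

lemma b_Id: "base (Id_on (Xt X))" and b_r1: "base (r1 X H)" by (auto simp: base_def)

lemma PP_b: assumes bs: "base s" and t: "t \<in> SH X S H" shows "PP (SH X S H) s t"
  using t
proof (rule SH_cases)
  assume "t = t_rel X"
  then show ?thesis using P_flip2[OF PP_bb[OF bs b_Id] cnt_t2] by simp
next
  assume "t = rm1 X H"
  then show ?thesis using P_flip2[OF PP_bb[OF bs b_r1] cnt_m2] by simp
next
  fix w assume "w \<in> S" "w \<noteq> Id_on X" "t = s_tilde w"
  then have "base t" by (auto simp: base_def)
  then show ?thesis using PP_bb[OF bs] by blast
qed (use PP_bb[OF bs] b_Id b_r1 in blast)+

lemma PP_all: assumes s: "s \<in> SH X S H" and t: "t \<in> SH X S H" shows "PP (SH X S H) s t"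
  using s
proof (rule SH_cases)
  assume "s = t_rel X"
  then show ?thesis using P_flip1[OF PP_b[OF b_Id t] cnt_t1] by simp
next
  assume "s = rm1 X H"
  then show ?thesis using P_flip1[OF PP_b[OF b_r1 t] cnt_m1] by simp
next
  fix w assume "w \<in> S" "w \<noteq> Id_on X" "s = s_tilde w"
  then have "base s" by (auto simp: base_def)
  then show ?thesis using PP_b[OF _ t] by blast
qed (use PP_b[OF _ t] b_Id b_r1 in blast)+

lemma main: "assoc_scheme (Xt X) (SH X S H)"
proof -
  have I: "\<forall>s\<in>SH X S H. \<forall>t\<in>SH X S H. \<forall>u\<in>SH X S H. \<exists>c::nat. \<forall>(\<alpha>,\<beta>)\<in>u.
        card ({\<gamma>. (\<alpha>,\<gamma>) \<in> s} \<inter> {\<gamma>. (\<beta>,\<gamma>) \<in> converse t}) = c"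
  proof (intro ballI)
    fix s t u assume s: "s \<in> SH X S H" and t: "t \<in> SH X S H" and u: "u \<in> SH X S H"
    obtain c where c: "\<forall>x a b z c' f. ((x,a,b),(z,c',f)) \<in> u \<longrightarrow> cnt s t (x,a,b) (z,c',f) = c"
      using PP_all[OF s t] u unfolding PP_def by blast
    have eq: "{\<gamma>. (\<alpha>,\<gamma>) \<in> s} \<inter> {\<gamma>. (\<beta>,\<gamma>) \<in> converse t} = {\<gamma>. (\<alpha>,\<gamma>) \<in> s \<and> (\<gamma>,\<beta>) \<in> t}" for \<alpha> \<beta> by auto
    show "\<exists>c::nat. \<forall>(\<alpha>,\<beta>)\<in>u. card ({\<gamma>. (\<alpha>,\<gamma>) \<in> s} \<inter> {\<gamma>. (\<beta>,\<gamma>) \<in> converse t}) = c"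
    proof (intro exI[of _ c] ballI)
      fix p assume p: "p \<in> u"
      obtain x a b z c' f where pe: "p = ((x,a,b),(z,c',f))" by (metis prod_cases3 surj_pair)
      show "case p of (\<alpha>,\<beta>) \<Rightarrow> card ({\<gamma>. (\<alpha>,\<gamma>) \<in> s} \<inter> {\<gamma>. (\<beta>,\<gamma>) \<in> converse t}) = c"
        using c p unfolding pe eq cnt_def by auto
    qed
  qed
  have "finite (UNIV::(bit\<times>bit) set)" by (metis UNIV_Times_UNIV finite_bit finite_cartesian_product)
  then have F: "finite (Xt X)" using finX by (simp add: Xt_eq finite_cartesian_product)
  have NE: "Xt X \<noteq> {}" using XNE by (auto simp: Xt_eq)
  have D: "\<forall>s\<in>SH X S H. \<forall>u\<in>SH X S H. s \<noteq> u \<longrightarrow> s \<inter> u = {}" using SH_disj by blast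
  have N: "\<forall>s\<in>SH X S H. s \<noteq> {}" using SH_ne by blast
  have C: "\<forall>s\<in>SH X S H. converse s \<in> SH X S H" using SH_conv by blast
  have Id: "Id_on (Xt X) \<in> SH X S H" by (simp add: SH_def)
  show ?thesis unfolding assoc_scheme_def using I F NE D N C Id SH_union by blast
qed

end

theorem theorem1p1:
  fixes X :: "'a set" and S :: "('a \<times> 'a) set set" and H :: "'a \<Rightarrow> 'a \<Rightarrow> real"
  assumes "assoc_scheme X S"
    and "card X > 1"
    and "hadamard X H"
  shows "assoc_scheme (Xt X) (SH X S H)"
  using main[OF assms(1) assms(3)] .

end
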